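(* Let $\mathscr{C}$ be a $(t,1)_q$ generalized convertible code over $\mathbb{F}_q$ with initial codes $\mathcal{C}^{I_1},\dots,\mathcal{C}^{I_t}$ ($\mathcal{C}^{I_i}$ an $[n_{I_i},k_{I_i}]_q$ code) and final code $\mathcal{C}^F$ (an $[n_F,k_F]_q$ code). Assume $\mathcal{C}^F$ has $(r,\delta)$-locality and let $d_F$ be its minimum distance. For $i\in[t]$ let $\Delta_i=|\mathcal{U}_i\setminus\mathcal{R}_i|-d_F+1$. Then for each $i\in[t]$, $$|\mathcal{R}_i|\ge\begin{cases}k_{I_i}, & \text{if } \Delta_i\le 0,\\ k_{I_i}-\Delta_i+(\delta-1)\left\lfloor\frac{\Delta_i}{r+\delta-1}\right\rfloor, & \text{otherwise}.\end{cases}$$ Moreover, if $d_F>n_{I_i}-k_{I_i}+1$ for some $i\in[t]$, then $\Delta_i\le 0$ and hence $|\mathcal{R}_i|\ge k_{I_i}$.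
   Context: All codes are linear over $\mathbb{F}_q$; $[n]=\{1,\dots,n\}$. A $(t,1)_q$ generalized convertible code consists of $t$ initial linear codes $\mathcal{C}^{I_1},\dots,\mathcal{C}^{I_t}$, $\mathcal{C}^{I_i}$ an $[n_{I_i},k_{I_i}]_q$ code, a final linear $[n_F,k_F]_q$ code $\mathcal{C}^F$ with $k_F=\sum_i k_{I_i}$, and a linear bijection $\phi:\mathcal{C}^{I_1}\times\cdots\times\mathcal{C}^{I_t}\to\mathcal{C}^F$, together with: for each $i$, a set $\mathcal{U}_i$ of coordinates of $\mathcal{C}^{I_i}$ (unchanged symbols) with an injective assignment of each $u\in\mathcal{U}_i$ to a coordinate of $\mathcal{C}^F$, images of different pairs $(i,u)$ distinct, such that for all $(c_1,\dots,c_t)$ the coordinate of $\phi(c_1,\dots,c_t)$ assigned to $u$ equals the $u$-th coordinate of $c_i$; the set $\mathcal{W}$ of coordinates of $\mathcal{C}^F$ not assigned to any unchanged symbol (written symbols); and for each $i$ a set $\mathcal{R}_i$ of coordinates of $\mathcal{C}^{I_i}$ (read symbols) such that $\phi(c_1,\dots,c_t)|_{\mathcal{W}}$ is a function of $(c_1|_{\mathcal{R}_1},\dots,c_t|_{\mathcal{R}_t})$. A code $\mathcal{C}\subseteq\mathbb{F}_q^n$ has $(r,\delta)$-locality ($r\ge1,\delta\ge2$) if every coordinate $i$ lies in a subset $J_i\subseteq[n]$ with $|J_i|\le r+\delta-1$ such that $\mathcal{C}|_{J_i}$ has minimum distance at least $\delta$. *)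

theory Defs
  imports Complex_Main
begin

text \<open>Vectors of length n over a field: functions nat => 'a supported on [n] = {1..n}.\<close>
definition vecs :: "nat \<Rightarrow> (nat \<Rightarrow> 'a::zero) set" where
  "vecs n = {c. \<forall>j. j \<notin> {1..n} \<longrightarrow> c j = 0}"

text \<open>An [n,k]_q linear code over the finite field 'a (q = CARD('a)).\<close>
definition linear_code :: "nat \<Rightarrow> nat \<Rightarrow> (nat \<Rightarrow> 'a::{finite,field}) set \<Rightarrow> bool" where
  "linear_code n k C \<longleftrightarrow>
     C \<subseteq> vecs n \<and> (\<lambda>_. 0) \<in> C \<and>
     (\<forall>x\<in>C. \<forall>y\<in>C. (\<lambda>j. x j + y j) \<in> C) \<and>
     (\<forall>a. \<forall>x\<in>C. (\<lambda>j. a * x j) \<in> C) \<and>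
     card C = card (UNIV :: 'a set) ^ k"

definition hamming_dist :: "(nat \<Rightarrow> 'a) \<Rightarrow> (nat \<Rightarrow> 'a) \<Rightarrow> nat" where
  "hamming_dist x y = card {j. x j \<noteq> y j}"

definition min_dist :: "(nat \<Rightarrow> 'a) set \<Rightarrow> nat" where
  "min_dist C = Inf {hamming_dist x y | x y. x \<in> C \<and> y \<in> C \<and> x \<noteq> y}"

text \<open>Restriction (puncturing onto J): coordinates outside J are set to 0.\<close>
definition restrict_code :: "nat set \<Rightarrow> (nat \<Rightarrow> 'a::zero) set \<Rightarrow> (nat \<Rightarrow> 'a) set" where
  "restrict_code J C = (\<lambda>c j. if j \<in> J then c j else 0) ` C"

text \<open>(r,delta)-locality; "C|_J has minimum distance at least delta" means every two
  distinct codewords of C|_J are at distance at least delta.\<close>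
definition has_locality :: "nat \<Rightarrow> nat \<Rightarrow> nat \<Rightarrow> (nat \<Rightarrow> 'a::zero) set \<Rightarrow> bool" where
  "has_locality n r \<delta> C \<longleftrightarrow>
     (\<forall>i\<in>{1..n}. \<exists>J\<subseteq>{1..n}. i \<in> J \<and> card J \<le> r + \<delta> - 1 \<and>
        (\<forall>x\<in>restrict_code J C. \<forall>y\<in>restrict_code J C. x \<noteq> y \<longrightarrow> hamming_dist x y \<ge> \<delta>))"

text \<open>Tuples (c_1,...,c_t) of initial codewords, encoded as functions i => c_i,
  with c_i = 0 for i outside [t].\<close>
definition code_tuples :: "nat \<Rightarrow> (nat \<Rightarrow> (nat \<Rightarrow> 'a::zero) set) \<Rightarrow> (nat \<Rightarrow> nat \<Rightarrow> 'a) set" where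
  "code_tuples t CI = {cs. (\<forall>i\<in>{1..t}. cs i \<in> CI i) \<and> (\<forall>i. i \<notin> {1..t} \<longrightarrow> cs i = (\<lambda>_. 0))}"

definition written :: "nat \<Rightarrow> nat \<Rightarrow> (nat \<Rightarrow> nat set) \<Rightarrow> (nat \<Rightarrow> nat \<Rightarrow> nat) \<Rightarrow> nat set" where
  "written t nF U \<sigma> = {1..nF} - (\<lambda>(i, u). \<sigma> i u) ` (SIGMA i:{1..t}. U i)"

text \<open>A (t,1)_q generalized convertible code with conversion map phi, unchanged symbols U i
  (assigned via sigma i u to final coordinates), and read symbols R i.\<close>
definition gen_convertible_code ::
  "nat \<Rightarrow> (nat \<Rightarrow> nat) \<Rightarrow> (nat \<Rightarrow> nat) \<Rightarrow> (nat \<Rightarrow> (nat \<Rightarrow> 'a::{finite,field}) set) \<Rightarrow>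
   nat \<Rightarrow> nat \<Rightarrow> (nat \<Rightarrow> 'a) set \<Rightarrow> ((nat \<Rightarrow> nat \<Rightarrow> 'a) \<Rightarrow> (nat \<Rightarrow> 'a)) \<Rightarrow>
   (nat \<Rightarrow> nat set) \<Rightarrow> (nat \<Rightarrow> nat \<Rightarrow> nat) \<Rightarrow> (nat \<Rightarrow> nat set) \<Rightarrow> bool" where
  "gen_convertible_code t nI kI CI nF kF CF \<phi> U \<sigma> R \<longleftrightarrow>
     (\<forall>i\<in>{1..t}. linear_code (nI i) (kI i) (CI i)) \<and>
     linear_code nF kF CF \<and>
     kF = (\<Sum>i\<in>{1..t}. kI i) \<and>
     bij_betw \<phi> (code_tuples t CI) CF \<and>
     (\<forall>cs\<in>code_tuples t CI. \<forall>ds\<in>code_tuples t CI.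
        \<phi> (\<lambda>i j. cs i j + ds i j) = (\<lambda>j. \<phi> cs j + \<phi> ds j)) \<and>
     (\<forall>a. \<forall>cs\<in>code_tuples t CI. \<phi> (\<lambda>i j. a * cs i j) = (\<lambda>j. a * \<phi> cs j)) \<and>
     (\<forall>i\<in>{1..t}. U i \<subseteq> {1..nI i} \<and> R i \<subseteq> {1..nI i}) \<and>
     (\<forall>i\<in>{1..t}. \<forall>u\<in>U i. \<sigma> i u \<in> {1..nF}) \<and>
     inj_on (\<lambda>(i, u). \<sigma> i u) (SIGMA i:{1..t}. U i) \<and>
     (\<forall>cs\<in>code_tuples t CI. \<forall>i\<in>{1..t}. \<forall>u\<in>U i. \<phi> cs (\<sigma> i u) = cs i u) \<and>
     (\<forall>cs\<in>code_tuples t CI. \<forall>ds\<in>code_tuples t CI.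
        (\<forall>i\<in>{1..t}. \<forall>j\<in>R i. cs i j = ds i j) \<longrightarrow>
        (\<forall>w\<in>written t nF U \<sigma>. \<phi> cs w = \<phi> ds w))"

end

theory Submission
  imports Defs
begin

definition rs :: "nat set \<Rightarrow> (nat \<Rightarrow> 'a::zero) \<Rightarrow> (nat \<Rightarrow> 'a)" where
  "rs X v = (\<lambda>j. if j \<in> X then v j else 0)"

definition NN :: "(nat \<Rightarrow> 'a::zero) set \<Rightarrow> nat set \<Rightarrow> nat" where
  "NN V X = card (rs X ` V)"

lemma rs_rs: "Z \<subseteq> Y \<Longrightarrow> rs Z (rs Y v) = rs Z v"
  unfolding rs_def by (rule ext) auto

lemma NN_insert:
  fixes V :: "(nat \<Rightarrow> 'a::{finite,zero}) set"
  assumes "finite V"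
  shows "NN V (insert j X) \<le> card (UNIV :: 'a set) * NN V X"
proof -
  let ?g = "\<lambda>p. (rs X p, p j)"
  have "card (rs (insert j X) ` V) \<le> card (rs X ` V \<times> (UNIV :: 'a set))"
  proof (rule card_inj_on_le)
    show "inj_on ?g (rs (insert j X) ` V)"
    proof (rule inj_onI)
      fix p p' assume "p \<in> rs (insert j X) ` V" "p' \<in> rs (insert j X) ` V" "?g p = ?g p'"
      then have a: "rs X p = rs X p'" "p j = p' j" by auto
      have b: "\<forall>t. t \<notin> insert j X \<longrightarrow> p t = 0 \<and> p' t = 0"
        using \<open>p \<in> rs (insert j X) ` V\<close> \<open>p' \<in> rs (insert j X) ` V\<close>
        unfolding rs_def by auto
      show "p = p'"
      proof
        fix t
        show "p t = p' t"
        proof (cases "t = j")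
          case True then show ?thesis using a(2) by simp
        next
          case F1: False
          show ?thesis
          proof (cases "t \<in> X")
            case True
            have "rs X p t = rs X p' t" using a(1) by simp
            then show ?thesis using True by (simp add: rs_def)
          next
            case False
            then show ?thesis using b F1 by simp
          qed
        qed
      qed
    qed
    show "?g ` rs (insert j X) ` V \<subseteq> rs X ` V \<times> UNIV"
    proof
      fix z assume "z \<in> ?g ` rs (insert j X) ` V"
      then obtain v where "v \<in> V" "z = ?g (rs (insert j X) v)" by auto
      then show "z \<in> rs X ` V \<times> UNIV" using rs_rs[of X "insert j X" v] by auto
    qed
    have "finite (rs X ` V)" using assms by simp
    then show "finite (rs X ` V \<times> (UNIV :: 'a set))" by simp
  qed
  then have "NN V (insert j X) \<le> NN V X * card (UNIV :: 'a set)"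
    unfolding NN_def by (simp only: card_cartesian_product)
  then show ?thesis by (simp only: mult.commute[of "NN V X"])
qed

lemma NN_union:
  fixes V :: "(nat \<Rightarrow> 'a::{finite,zero}) set"
  assumes "finite V" "finite F"
  shows "NN V (X \<union> F) \<le> card (UNIV :: 'a set) ^ card (F - X) * NN V X"
  using assms(2)
proof (induction F rule: finite_induct)
  case empty then show ?case by simp
next
  case (insert x F)
  show ?case
  proof (cases "x \<in> X")
    case True
    then have e1: "X \<union> insert x F = X \<union> F" and e2: "insert x F - X = F - X" by auto
    show ?thesis unfolding e1 e2 by (rule insert.IH)
  next
    case False
    have e: "X \<union> insert x F = insert x (X \<union> F)" by auto
    have e3: "insert x F - X = insert x (F - X)" using False by auto
    have c: "card (insert x F - X) = Suc (card (F - X))"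
      unfolding e3 using insert.hyps by (intro card_insert_disjoint) auto
    have "NN V (X \<union> insert x F) \<le> card (UNIV :: 'a set) * NN V (X \<union> F)"
      unfolding e by (rule NN_insert[OF assms(1)])
    also have "\<dots> \<le> card (UNIV :: 'a set) * (card (UNIV :: 'a set) ^ card (F - X) * NN V X)"
      using insert.IH by (rule mult_left_mono) simp
    finally show ?thesis unfolding c by (simp add: mult.assoc)
  qed
qed

lemma NN_det:
  assumes "Z \<subseteq> Y" "finite V"
    and det: "\<forall>v\<in>V. \<forall>w\<in>V. rs Z v = rs Z w \<longrightarrow> rs Y v = rs Y w"
  shows "NN V Y \<le> NN V Z"
  unfolding NN_def
proof (rule card_inj_on_le[where f="rs Z"])
  show "inj_on (rs Z) (rs Y ` V)"
  proof (rule inj_onI)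
    fix p p' assume "p \<in> rs Y ` V" "p' \<in> rs Y ` V" and e: "rs Z p = rs Z p'"
    then obtain v v' where v: "v \<in> V" "p = rs Y v" and v': "v' \<in> V" "p' = rs Y v'" by blast
    have "rs Z v = rs Z v'" using e v v' by (simp add: rs_rs[OF assms(1)])
    then show "p = p'" using det v v' by blast
  qed
  show "rs Z ` rs Y ` V \<subseteq> rs Z ` V"
  proof
    fix z assume "z \<in> rs Z ` rs Y ` V"
    then obtain v where "v \<in> V" "z = rs Z (rs Y v)" by blast
    then show "z \<in> rs Z ` V" using rs_rs[OF assms(1), of v] by blast
  qed
  show "finite (rs Z ` V)" using assms(2) by (rule finite_imageI)
qed

lemma NN_empty:
  assumes "V \<noteq> {}" shows "NN V {} = 1"
proof -
  have r: "rs {} v = (\<lambda>j. 0)" for v :: "nat \<Rightarrow> 'a" unfolding rs_def by simp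
  have "rs {} ` V = {\<lambda>j. 0}" using assms unfolding r by blast
  then show ?thesis unfolding NN_def by simp
qed


locale lrc =
  fixes V :: "(nat \<Rightarrow> 'a::{finite,field}) set" and S :: "nat set" and d r \<delta> q :: nat
  assumes q_def: "q = card (UNIV :: 'a set)" and finV: "finite V" and Vne: "V \<noteq> {}" and finS: "finite S"
    and agree: "\<And>v w j. v \<in> V \<Longrightarrow> w \<in> V \<Longrightarrow> j \<notin> S \<Longrightarrow> v j = w j"
    and dist: "\<And>v w. v \<in> V \<Longrightarrow> w \<in> V \<Longrightarrow> v \<noteq> w \<Longrightarrow> d \<le> hamming_dist v w"
    and loc: "\<And>j. j \<in> S \<Longrightarrow> \<exists>J. finite J \<and> j \<in> J \<and> card J \<le> r + \<delta> - 1 \<and>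
        (\<forall>v\<in>V. \<forall>w\<in>V. rs J v \<noteq> rs J w \<longrightarrow> \<delta> \<le> hamming_dist (rs J v) (rs J w))"
    and \<delta>1: "\<delta> \<ge> 1"
begin


lemma q2: "q > 1"
proof -
  have "card {0::'a, 1} \<le> q" unfolding q_def by (rule card_mono) auto
  then show ?thesis by simp
qed

lemma NN_S: "NN V S = card V"
  unfolding NN_def
proof (rule card_image, rule inj_onI)
  fix v w assume v: "v \<in> V" and w: "w \<in> V" and e: "rs S v = rs S w"
  show "v = w"
  proof
    fix j show "v j = w j"
    proof (cases "j \<in> S")
      case True
      then show ?thesis using fun_cong[OF e, of j] by (simp add: rs_def)
    next
      case False then show ?thesis using agree v w by blast
    qed
  qed
qed

lemma not_inj:
  assumes "NN V X < card V"
  obtains v w where "v \<in> V" "w \<in> V" "v \<noteq> w" "rs X v = rs X w"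
proof -
  have "\<not> inj_on (rs X) V"
  proof
    assume "inj_on (rs X) V"
    then have "NN V X = card V" unfolding NN_def by (rule card_image)
    then show False using assms by simp
  qed
  then show ?thesis using that unfolding inj_on_def by blast
qed

lemma diff_set:
  assumes "v \<in> V" "w \<in> V" "rs X v = rs X w"
  shows "{j. v j \<noteq> w j} \<subseteq> S - X"
proof
  fix j assume "j \<in> {j. v j \<noteq> w j}"
  then have j: "v j \<noteq> w j" by simp
  then have "j \<in> S" using agree assms by blast
  moreover have "j \<notin> X"
  proof
    assume "j \<in> X"
    then have "v j = w j" using fun_cong[OF assms(3), of j] by (simp add: rs_def)
    then show False using j by simp
  qed
  ultimately show "j \<in> S - X" by simp
qed

lemma dist_bound:
  assumes "X \<subseteq> S" "NN V X < card V"
  shows "card X + d \<le> card S"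
proof -
  obtain v w where vw: "v \<in> V" "w \<in> V" "v \<noteq> w" "rs X v = rs X w"
    using not_inj[OF assms(2)] by blast
  have "d \<le> hamming_dist v w" using dist vw by blast
  also have "\<dots> = card {j. v j \<noteq> w j}" by (simp add: hamming_dist_def)
  also have "\<dots> \<le> card (S - X)"
    using diff_set[OF vw(1,2,4)] finS by (intro card_mono) auto
  also have "\<dots> = card S - card X"
    using assms(1) finS by (intro card_Diff_subset) (auto intro: finite_subset)
  finally show ?thesis using card_mono[OF finS assms(1)] by simp
qed

lemma pad:
  assumes "X \<subseteq> S" "NN V X \<le> q ^ M" "q ^ c * NN V X \<le> q ^ card X" "q ^ M < card V"
  shows "c + M + d \<le> card S"
  using assms
proof (induction "card (S - X)" arbitrary: X rule: less_induct)
  case less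
  have finX: "finite X" using less.prems(1) finS by (rule finite_subset)
  have "X \<noteq> S" using less.prems NN_S by auto
  then obtain j0 where j0: "j0 \<in> S - X" using less.prems(1) by blast
  show ?case
  proof (cases "\<exists>j\<in>S - X. NN V (insert j X) \<le> q ^ M")
    case True
    then obtain j where j: "j \<in> S - X" "NN V (insert j X) \<le> q ^ M" by blast
    have lt: "card (S - insert j X) < card (S - X)"
      using j(1) finS by (intro psubset_card_mono) auto
    have ci: "card (insert j X) = Suc (card X)" using j(1) finX by simp
    have "q ^ c * NN V (insert j X) \<le> q ^ c * (q * NN V X)"
      using NN_insert[OF finV, folded q_def] by (rule mult_left_mono) simp
    also have "\<dots> = q * (q ^ c * NN V X)" by (simp add: ac_simps)
    also have "\<dots> \<le> q * q ^ card X" using less.prems(3) by (rule mult_left_mono) simp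
    also have "\<dots> = q ^ card (insert j X)" using ci by simp
    finally have h3: "q ^ c * NN V (insert j X) \<le> q ^ card (insert j X)" .
    show ?thesis
      using less.hyps[OF lt _ j(2) h3 less.prems(4)] j(1) less.prems(1) by blast
  next
    case False
    then have "q ^ M < NN V (insert j0 X)" using j0 by force
    also have "\<dots> \<le> q * NN V X" using NN_insert[OF finV, folded q_def] .
    finally have a: "q ^ M < q * NN V X" .
    have "q ^ (c + M) = q ^ c * q ^ M" by (simp add: power_add)
    also have "\<dots> < q ^ c * (q * NN V X)" using a q2 by simp
    also have "\<dots> = q * (q ^ c * NN V X)" by (simp add: ac_simps)
    also have "\<dots> \<le> q * q ^ card X" using less.prems(3) by (rule mult_left_mono) simp
    also have "\<dots> = q ^ Suc (card X)" by simp
    finally have "c + M < Suc (card X)" using q2 by (rule power_less_imp_less_exp[rotated])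
    moreover have "card X + d \<le> card S"
      using less.prems by (intro dist_bound) auto
    ultimately show ?thesis by simp
  qed
qed


lemma step:
  assumes XS: "X \<subseteq> S" and NX: "NN V X < card V"
  obtains Y where "X \<subseteq> Y" "Y \<subseteq> S" "NN V Y \<le> q ^ r * NN V X"
    "q ^ (\<delta> - 1) * NN V Y \<le> q ^ (card Y - card X) * NN V X"
proof -
  have finX: "finite X" using XS finS by (rule finite_subset)
  obtain v w where vw: "v \<in> V" "w \<in> V" "v \<noteq> w" "rs X v = rs X w"
    using not_inj[OF NX] by blast
  obtain j where j: "v j \<noteq> w j" using vw(3) by blast
  have jS: "j \<in> S - X" using diff_set[OF vw(1,2,4)] j by blast
  obtain J where J: "finite J" "j \<in> J" "card J \<le> r + \<delta> - 1"
    and Jd: "\<forall>v\<in>V. \<forall>w\<in>V. rs J v \<noteq> rs J w \<longrightarrow> \<delta> \<le> hamming_dist (rs J v) (rs J w)"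
    using loc[of j] jS by blast
  define A where "A = J \<inter> S"
  have finA: "finite A" unfolding A_def using J(1) by simp
  have hsub: "{t. rs J v' t \<noteq> rs J w' t} \<subseteq> (A - X) - E"
    if "v' \<in> V" "w' \<in> V" "rs (X \<union> E) v' = rs (X \<union> E) w'" for v' w' E
  proof
    fix t assume "t \<in> {t. rs J v' t \<noteq> rs J w' t}"
    then have t: "t \<in> J" "v' t \<noteq> w' t" by (auto simp: rs_def split: if_splits)
    have "t \<in> S - (X \<union> E)" using diff_set[OF that] t(2) by blast
    then show "t \<in> (A - X) - E" using t(1) unfolding A_def by blast
  qed
  have eA: "card (A - X) \<ge> \<delta>"
  proof (rule ccontr)
    assume c: "\<not> \<delta> \<le> card (A - X)"
    have "rs J v \<noteq> rs J w" using j J(2) by (auto simp: rs_def fun_eq_iff)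
    then have "\<delta> \<le> hamming_dist (rs J v) (rs J w)" using Jd vw by blast
    also have "\<dots> = card {t. rs J v t \<noteq> rs J w t}" by (simp add: hamming_dist_def)
    also have "\<dots> \<le> card ((A - X) - {})"
      using hsub[of v w "{}"] vw finA by (intro card_mono) auto
    finally show False using c by simp
  qed
  obtain E where E: "E \<subseteq> A - X" "card E = card (A - X) - (\<delta> - 1)" "finite E"
    using obtain_subset_with_card_n[of "card (A - X) - (\<delta> - 1)" "A - X"] by auto
  have cAE: "card ((A - X) - E) = \<delta> - 1"
    using E finA eA \<delta>1 by (subst card_Diff_subset) auto
  have det: "\<forall>v'\<in>V. \<forall>w'\<in>V. rs (X \<union> E) v' = rs (X \<union> E) w' \<longrightarrow> rs (X \<union> A) v' = rs (X \<union> A) w'"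
  proof (intro ballI impI)
    fix v' w' assume v': "v' \<in> V" and w': "w' \<in> V" and e: "rs (X \<union> E) v' = rs (X \<union> E) w'"
    show "rs (X \<union> A) v' = rs (X \<union> A) w'"
    proof (rule ccontr)
      assume ne: "rs (X \<union> A) v' \<noteq> rs (X \<union> A) w'"
      then obtain t where t: "t \<in> X \<union> A" "v' t \<noteq> w' t" by (auto simp: rs_def fun_eq_iff split: if_splits)
      have "t \<in> (A - X) - E" using diff_set[OF v' w' e] t by blast
      then have "t \<in> J" unfolding A_def by blast
      then have "rs J v' \<noteq> rs J w'" using t(2) by (auto simp: rs_def fun_eq_iff)
      then have "\<delta> \<le> hamming_dist (rs J v') (rs J w')" using Jd v' w' by blast
      also have "\<dots> = card {t. rs J v' t \<noteq> rs J w' t}" by (simp add: hamming_dist_def)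
      also have "\<dots> \<le> card ((A - X) - E)"
        using hsub[OF v' w' e] finA by (intro card_mono) auto
      finally show False using cAE \<delta>1 by simp
    qed
  qed
  have "NN V (X \<union> A) \<le> NN V (X \<union> E)"
    by (rule NN_det[OF _ finV det]) (use E(1) in blast)
  also have "\<dots> \<le> q ^ card (E - X) * NN V X"
    using NN_union[OF finV E(3), of X, folded q_def] .
  also have "E - X = E" using E(1) by blast
  finally have N1: "NN V (X \<union> A) \<le> q ^ card E * NN V X" by simp
  have "card (A - X) \<le> card A" using finA by (intro card_mono) auto
  also have "card A \<le> card J" unfolding A_def using J(1) by (intro card_mono) auto
  finally have "card E \<le> r" using E(2) J(3) by simp
  then have "q ^ card E \<le> q ^ r" using q2 by simp
  then have N2: "NN V (X \<union> A) \<le> q ^ r * NN V X" using N1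
    by (meson le_trans mult_le_mono1)
  have cU: "card (X \<union> A) = card X + card (A - X)"
  proof -
    have e: "X \<union> A = X \<union> (A - X)" by blast
    have "card (X \<union> (A - X)) = card X + card (A - X)"
      by (rule card_Un_disjoint) (use finX finA in auto)
    then show ?thesis unfolding e .
  qed
  have "q ^ (\<delta> - 1) * NN V (X \<union> A) \<le> q ^ (\<delta> - 1) * (q ^ card E * NN V X)"
    using N1 by simp
  also have "\<dots> = q ^ ((\<delta> - 1) + card E) * NN V X" by (simp add: power_add)
  also have "(\<delta> - 1) + card E = card (X \<union> A) - card X" using cU E(2) eA \<delta>1 by simp
  finally have N3: "q ^ (\<delta> - 1) * NN V (X \<union> A) \<le> q ^ (card (X \<union> A) - card X) * NN V X" .
  show ?thesis
    by (rule that[of "X \<union> A"]) (use XS A_def N2 N3 in auto)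
qed

lemma groups:
  assumes "q ^ (L * r) < card V" "l \<le> L"
  shows "\<exists>X\<subseteq>S. NN V X \<le> q ^ (l * r) \<and> q ^ (l * (\<delta> - 1)) * NN V X \<le> q ^ card X"
  using assms(2)
proof (induction l)
  case 0
  show ?case by (rule exI[of _ "{}"]) (simp add: NN_empty[OF Vne])
next
  case (Suc l)
  then obtain X where X: "X \<subseteq> S" "NN V X \<le> q ^ (l * r)" "q ^ (l * (\<delta> - 1)) * NN V X \<le> q ^ card X"
    by auto
  have "q ^ (l * r) \<le> q ^ (L * r)" using Suc.prems q2 by simp
  then have NX: "NN V X < card V" using X(2) assms(1) by linarith
  obtain Y where Y: "X \<subseteq> Y" "Y \<subseteq> S" "NN V Y \<le> q ^ r * NN V X"
    "q ^ (\<delta> - 1) * NN V Y \<le> q ^ (card Y - card X) * NN V X"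
    using step[OF X(1) NX] by blast
  have cXY: "card X \<le> card Y" using Y(1,2) finS by (intro card_mono) (auto intro: finite_subset)
  have "NN V Y \<le> q ^ r * q ^ (l * r)" using Y(3) X(2) by (meson le_trans mult_le_mono2)
  then have a: "NN V Y \<le> q ^ (Suc l * r)" by (simp add: power_add)
  have "q ^ (Suc l * (\<delta> - 1)) * NN V Y = q ^ (l * (\<delta> - 1)) * (q ^ (\<delta> - 1) * NN V Y)"
    by (simp add: power_add ac_simps)
  also have "\<dots> \<le> q ^ (l * (\<delta> - 1)) * (q ^ (card Y - card X) * NN V X)"
    using Y(4) by simp
  also have "\<dots> = q ^ (card Y - card X) * (q ^ (l * (\<delta> - 1)) * NN V X)" by (simp add: ac_simps)
  also have "\<dots> \<le> q ^ (card Y - card X) * q ^ card X" using X(3) by simp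
  also have "\<dots> = q ^ card Y" using cXY by (simp add: power_add[symmetric])
  finally show ?case using a Y(2) by blast
qed

lemma main_bound:
  assumes "q ^ m \<le> card V" "L * r < m"
  shows "L * (\<delta> - 1) + m + d \<le> card S + 1"
proof -
  have "q ^ (L * r) < q ^ m" using assms(2) q2 by simp
  then have H: "q ^ (L * r) < card V" using assms(1) by linarith
  obtain X where X: "X \<subseteq> S" "NN V X \<le> q ^ (L * r)" "q ^ (L * (\<delta> - 1)) * NN V X \<le> q ^ card X"
    using groups[OF H order_refl] by blast
  have "q ^ (L * r) \<le> q ^ (m - 1)" using assms(2) q2 by simp
  then have a: "NN V X \<le> q ^ (m - 1)" using X(2) by linarith
  have "q ^ (m - 1) < q ^ m" using assms(2) q2 by simp
  then have b: "q ^ (m - 1) < card V" using assms(1) by linarith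
  have "L * (\<delta> - 1) + (m - 1) + d \<le> card S" by (rule pad[OF X(1) a X(3) b])
  then show ?thesis using assms(2) by simp
qed

end


lemma fiber:
  assumes "finite C" "C \<noteq> {}"
  shows "\<exists>p. card C \<le> card (f ` C) * card {c\<in>C. f c = p}"
proof -
  let ?g = "\<lambda>p. card {c\<in>C. f c = p}"
  have fin: "finite (f ` C)" using assms(1) by simp
  have ne: "?g ` f ` C \<noteq> {}" using assms(2) by simp
  have "Max (?g ` f ` C) \<in> ?g ` f ` C" using fin ne by (intro Max_in) auto
  then obtain p0 where p0: "Max (?g ` f ` C) = ?g p0" "p0 \<in> f ` C" by (rule imageE)
  have "C = (\<Union>p\<in>f ` C. {c\<in>C. f c = p})" by blast
  then have "card C = card (\<Union>p\<in>f ` C. {c\<in>C. f c = p})" by simp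
  also have "\<dots> \<le> (\<Sum>p\<in>f ` C. ?g p)" using fin by (rule card_UN_le)
  also have "\<dots> \<le> of_nat (card (f ` C)) * ?g p0"
  proof (rule sum_bounded_above)
    fix p assume "p \<in> f ` C"
    then show "?g p \<le> ?g p0" unfolding p0(1)[symmetric] using fin by (intro Max_ge) auto
  qed
  finally show ?thesis by auto
qed

lemma key:
  fixes t :: nat and nI kI :: "nat \<Rightarrow> nat" and CI :: "nat \<Rightarrow> (nat \<Rightarrow> 'a::{finite,field}) set"
    and nF kF :: nat and CF :: "(nat \<Rightarrow> 'a) set"
    and \<phi> :: "(nat \<Rightarrow> nat \<Rightarrow> 'a) \<Rightarrow> (nat \<Rightarrow> 'a)"
    and U R :: "nat \<Rightarrow> nat set" and \<sigma> :: "nat \<Rightarrow> nat \<Rightarrow> nat"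
    and r \<delta> dF :: nat
  assumes conv: "gen_convertible_code t nI kI CI nF kF CF \<phi> U \<sigma> R"
    and \<delta>: "\<delta> \<ge> 2"
    and loc: "has_locality nF r \<delta> CF"
    and dF: "dF = min_dist CF"
    and i: "i \<in> {1..t}"
    and lt: "L * r < kI i - card (R i)"
  shows "L * (\<delta> - 1) + (kI i - card (R i)) + dF \<le> card (U i - R i) + 1"
proof -
  define q where "q = card (UNIV :: 'a set)"
  note cv = conv[unfolded gen_convertible_code_def]
  have linC: "linear_code (nI i) (kI i) (CI i)" using cv i by blast
  have linF: "linear_code nF kF CF" using cv by blast
  have bij: "bij_betw \<phi> (code_tuples t CI) CF" using cv by blast
  have URsub: "U i \<subseteq> {1..nI i}" "R i \<subseteq> {1..nI i}" using cv i by blast+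
  have \<sigma>in: "\<And>i u. i \<in> {1..t} \<Longrightarrow> u \<in> U i \<Longrightarrow> \<sigma> i u \<in> {1..nF}" using cv by blast
  have inj\<sigma>: "inj_on (\<lambda>(i, u). \<sigma> i u) (SIGMA i:{1..t}. U i)" using cv by blast
  have unch: "\<And>cs i u. cs \<in> code_tuples t CI \<Longrightarrow> i \<in> {1..t} \<Longrightarrow> u \<in> U i \<Longrightarrow> \<phi> cs (\<sigma> i u) = cs i u"
    using cv by blast
  have readc: "\<And>cs ds w. cs \<in> code_tuples t CI \<Longrightarrow> ds \<in> code_tuples t CI \<Longrightarrow>
        (\<forall>i\<in>{1..t}. \<forall>j\<in>R i. cs i j = ds i j) \<Longrightarrow> w \<in> written t nF U \<sigma> \<Longrightarrow> \<phi> cs w = \<phi> ds w"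
    using cv by blast
  have zeroI: "(\<lambda>_. 0) \<in> CI i'" if "i' \<in> {1..t}" for i'
  proof -
    have "linear_code (nI i') (kI i') (CI i')" using cv that by blast
    then show ?thesis unfolding linear_code_def by blast
  qed
  let ?C = "CI i" and ?R = "R i"
  have cardC: "card ?C = q ^ kI i" using linC unfolding linear_code_def q_def by blast
  have "q > 0" unfolding q_def by (simp add: card_gt_0_iff)
  then have finC: "finite ?C" using cardC by (intro card_ge_0_finite) simp
  have neC: "?C \<noteq> {}" using zeroI[OF i] by blast
  obtain p where p: "card ?C \<le> card (rs ?R ` ?C) * card {c\<in>?C. rs ?R c = p}"
    using fiber[OF finC neC, of "rs ?R"] by blast
  define F where "F = {c\<in>?C. rs ?R c = p}"
  have finR: "finite ?R" using URsub(2) by (rule finite_subset) simp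
  have "NN ?C ({} \<union> ?R) \<le> q ^ card (?R - {}) * NN ?C {}"
    unfolding q_def by (rule NN_union[OF finC finR])
  then have NR: "card (rs ?R ` ?C) \<le> q ^ card ?R" using NN_empty[OF neC] unfolding NN_def by simp
  have qF: "q ^ kI i \<le> q ^ card ?R * card F"
    using p NR unfolding cardC F_def by (meson le_trans mult_le_mono1)
  define emb where "emb c = (\<lambda>i'. if i' = i then c else (\<lambda>_::nat. 0::'a))" for c :: "nat \<Rightarrow> 'a"
  have embT: "emb c \<in> code_tuples t CI" if "c \<in> ?C" for c
    unfolding code_tuples_def emb_def using that zeroI i by auto
  have inj_emb: "inj emb" unfolding emb_def inj_def by (metis)
  define V where "V = \<phi> ` emb ` F"
  have FC: "F \<subseteq> ?C" unfolding F_def by blast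
  have injphi: "inj_on \<phi> (code_tuples t CI)" using bij by (simp add: bij_betw_def)
  have VCF: "V \<subseteq> CF" unfolding V_def using bij FC embT by (auto simp: bij_betw_def)
  have cardV: "card V = card F"
  proof -
    have "card V = card (emb ` F)" unfolding V_def
      using injphi embT FC by (intro card_image) (auto intro: inj_on_subset)
    also have "\<dots> = card F" using inj_emb by (intro card_image) (auto intro: inj_on_subset)
    finally show ?thesis .
  qed
  define S where "S = \<sigma> i ` (U i - ?R)"
  have inj\<sigma>i: "inj_on (\<sigma> i) (U i)"
  proof (rule inj_onI)
    fix u u' assume u: "u \<in> U i" "u' \<in> U i" "\<sigma> i u = \<sigma> i u'"
    have "(i, u) = (i, u')"
      by (rule inj_onD[OF inj\<sigma>]) (use u i in auto)
    then show "u = u'" by simp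
  qed
  have cardS: "card S = card (U i - ?R)" unfolding S_def
    using inj\<sigma>i by (intro card_image) (auto intro: inj_on_subset)
  have finF: "finite F" using FC finC by (rule finite_subset)
  have m_le: "q ^ (kI i - card ?R) \<le> card V"
  proof -
    have "q ^ card ?R * q ^ (kI i - card ?R) = q ^ kI i" using lt
      by (simp add: power_add[symmetric])
    then have "q ^ card ?R * q ^ (kI i - card ?R) \<le> q ^ card ?R * card F" using qF by simp
    then show ?thesis unfolding cardV using \<open>q > 0\<close> by simp
  qed
  have "lrc V S dF r \<delta> q"
  proof
    show "q = card (UNIV :: 'a set)" by (rule q_def)
    show "finite V" unfolding V_def using finF by simp
    show "V \<noteq> {}" using m_le \<open>q > 0\<close> by auto
    show "finite S" unfolding S_def using URsub(1) by (auto intro: finite_subset)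
    show "\<delta> \<ge> 1" using \<delta> by simp
    show "v j = w j" if v: "v \<in> V" and w: "w \<in> V" and j: "j \<notin> S" for v w j
    proof -
      obtain c where c: "c \<in> F" "v = \<phi> (emb c)" using v unfolding V_def by blast
      obtain c' where c': "c' \<in> F" "w = \<phi> (emb c')" using w unfolding V_def by blast
      have cs: "emb c \<in> code_tuples t CI" "emb c' \<in> code_tuples t CI" using c c' FC embT by auto
      have onR: "c u = c' u" if "u \<in> ?R" for u
        using c(1) c'(1) that fun_cong[of "rs ?R c" p u] fun_cong[of "rs ?R c'" p u]
        unfolding F_def rs_def by auto
      show ?thesis
      proof (cases "j \<in> {1..nF}")
        case False
        have "v \<in> vecs nF" "w \<in> vecs nF" using v w VCF linF unfolding linear_code_def by blast+
        then show ?thesis using False unfolding vecs_def by simp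
      next
        case True
        show ?thesis
        proof (cases "j \<in> written t nF U \<sigma>")
          case True
          have ag: "\<forall>i'\<in>{1..t}. \<forall>u\<in>R i'. emb c i' u = emb c' i' u"
            using onR unfolding emb_def by auto
          show ?thesis using readc[OF cs ag True] c c' by simp
        next
          case False
          then obtain i' u where iu: "i' \<in> {1..t}" "u \<in> U i'" "j = \<sigma> i' u"
            using True unfolding written_def by auto
          have e1: "v j = emb c i' u" using unch[OF cs(1) iu(1,2)] c(2) iu(3) by simp
          have e2: "w j = emb c' i' u" using unch[OF cs(2) iu(1,2)] c'(2) iu(3) by simp
          show ?thesis
          proof (cases "i' = i")
            case True
            then have "u \<in> ?R" using iu j unfolding S_def by blast
            then show ?thesis using e1 e2 True onR unfolding emb_def by simp
          next
            case False
            then show ?thesis using e1 e2 unfolding emb_def by simp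
          qed
        qed
      qed
    qed
    show "dF \<le> hamming_dist v w" if "v \<in> V" "w \<in> V" "v \<noteq> w" for v w
    proof -
      have "hamming_dist v w \<in> {hamming_dist x y | x y. x \<in> CF \<and> y \<in> CF \<and> x \<noteq> y}"
        using that VCF by blast
      then show ?thesis unfolding dF min_dist_def by (rule cInf_lower) simp
    qed
    show "\<exists>J. finite J \<and> j \<in> J \<and> card J \<le> r + \<delta> - 1 \<and>
        (\<forall>v\<in>V. \<forall>w\<in>V. rs J v \<noteq> rs J w \<longrightarrow> \<delta> \<le> hamming_dist (rs J v) (rs J w))"
      if j: "j \<in> S" for j
    proof -
      have jn: "j \<in> {1..nF}" using j \<sigma>in i unfolding S_def by blast
      obtain J where J: "J \<subseteq> {1..nF}" "j \<in> J" "card J \<le> r + \<delta> - 1"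
        and Jd: "\<forall>x\<in>restrict_code J CF. \<forall>y\<in>restrict_code J CF. x \<noteq> y \<longrightarrow> hamming_dist x y \<ge> \<delta>"
        using loc[unfolded has_locality_def, rule_format, OF jn] by blast
      have rc: "rs J v \<in> restrict_code J CF" if "v \<in> V" for v
        using that VCF unfolding restrict_code_def rs_def by blast
      have fJ: "finite J" using J(1) by (rule finite_subset) simp
      have "\<forall>v\<in>V. \<forall>w\<in>V. rs J v \<noteq> rs J w \<longrightarrow> \<delta> \<le> hamming_dist (rs J v) (rs J w)"
      proof (intro ballI impI)
        fix v w assume "v \<in> V" "w \<in> V" "rs J v \<noteq> rs J w"
        then show "\<delta> \<le> hamming_dist (rs J v) (rs J w)" using Jd rc by blast
      qed
      then show ?thesis using fJ J(2,3) by blast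
    qed
  qed
  then have "L * (\<delta> - 1) + (kI i - card ?R) + dF \<le> card S + 1"
    using m_le lt by (rule lrc.main_bound)
  then show ?thesis unfolding cardS .
qed


theorem mainTheorem3:
  fixes t :: nat and nI kI :: "nat \<Rightarrow> nat" and CI :: "nat \<Rightarrow> (nat \<Rightarrow> 'a::{finite,field}) set"
    and nF kF :: nat and CF :: "(nat \<Rightarrow> 'a) set"
    and \<phi> :: "(nat \<Rightarrow> nat \<Rightarrow> 'a) \<Rightarrow> (nat \<Rightarrow> 'a)"
    and U R :: "nat \<Rightarrow> nat set" and \<sigma> :: "nat \<Rightarrow> nat \<Rightarrow> nat"
    and r \<delta> dF :: nat and \<Delta> :: "nat \<Rightarrow> int"
  assumes conv: "gen_convertible_code t nI kI CI nF kF CF \<phi> U \<sigma> R"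
    and r: "r \<ge> 1" and \<delta>: "\<delta> \<ge> 2"
    and loc: "has_locality nF r \<delta> CF"
    and dF: "dF = min_dist CF"
    and \<Delta>_def: "\<And>i. \<Delta> i = int (card (U i - R i)) - int dF + 1"
  shows "(\<forall>i\<in>{1..t}. int (card (R i)) \<ge>
            (if \<Delta> i \<le> 0 then int (kI i)
             else int (kI i) - \<Delta> i + (int \<delta> - 1) * \<lfloor>real_of_int (\<Delta> i) / real (r + \<delta> - 1)\<rfloor>))
       \<and> (\<forall>i\<in>{1..t}. int dF > int (nI i) - int (kI i) + 1 \<longrightarrow>
            \<Delta> i \<le> 0 \<and> card (R i) \<ge> kI i)"
proof -
  have keyi: "L * (\<delta> - 1) + (kI i - card (R i)) + dF \<le> card (U i - R i) + 1"
    if "i \<in> {1..t}" "L * r < kI i - card (R i)" for i L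
    by (rule key[OF conv \<delta> loc dF that])
  have sR: "card (U i - R i) + card (R i) \<le> nI i" if i: "i \<in> {1..t}" for i
  proof -
    have sub: "U i \<subseteq> {1..nI i}" "R i \<subseteq> {1..nI i}"
      using conv i unfolding gen_convertible_code_def by blast+
    have fin: "finite (U i - R i)" "finite (R i)" using sub by (auto intro: finite_subset)
    have "card (U i - R i) + card (R i) = card ((U i - R i) \<union> R i)"
      using fin by (intro card_Un_disjoint[symmetric]) auto
    also have "\<dots> \<le> card {1..nI i}" using sub by (intro card_mono) auto
    finally show ?thesis by simp
  qed
  have part1: "int (card (R i)) \<ge>
            (if \<Delta> i \<le> 0 then int (kI i)
             else int (kI i) - \<Delta> i + (int \<delta> - 1) * \<lfloor>real_of_int (\<Delta> i) / real (r + \<delta> - 1)\<rfloor>)"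
    if i: "i \<in> {1..t}" for i
  proof (cases "\<Delta> i \<le> 0")
    case True
    have "kI i \<le> card (R i)"
    proof (rule ccontr)
      assume "\<not> kI i \<le> card (R i)"
      then have "0 * r < kI i - card (R i)" by simp
      from keyi[OF i this] have "kI i - card (R i) + dF \<le> card (U i - R i) + 1" by simp
      then show False using True \<Delta>_def[of i] \<open>\<not> kI i \<le> card (R i)\<close> by linarith
    qed
    then show ?thesis using True by simp
  next
    case False
    define D where "D = r + \<delta> - 1"
    have D2: "D \<ge> 2" using r \<delta> unfolding D_def by simp
    define fl where "fl = \<Delta> i div int D"
    have "real (r + \<delta> - 1) = real_of_int (int D)" unfolding D_def by simp
    then have flr: "\<lfloor>real_of_int (\<Delta> i) / real (r + \<delta> - 1)\<rfloor> = fl"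
      unfolding fl_def by (simp only: floor_divide_of_int_eq)
    have fl0: "fl \<ge> 0" unfolding fl_def using False D2 by (subst pos_imp_zdiv_nonneg_iff) auto
    have "\<Delta> i = fl * int D + \<Delta> i mod int D" unfolding fl_def by simp
    moreover have "\<Delta> i mod int D \<ge> 0" using D2 by simp
    ultimately have flD: "fl * int D \<le> \<Delta> i" by linarith
    have Dsplit: "fl * int D = fl * int r + fl * (int \<delta> - 1)"
      unfolding D_def using \<delta> by (simp add: algebra_simps of_nat_diff)
    define L where "L = nat fl"
    have L: "int L = fl" unfolding L_def using fl0 by simp
    have goal: "int (card (R i)) \<ge> int (kI i) - \<Delta> i + (int \<delta> - 1) * fl"
    proof (cases "kI i \<le> card (R i)")
      case True
      have "fl * int r \<ge> 0" using fl0 by simp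
      then show ?thesis using True flD Dsplit by (simp add: algebra_simps)
    next
      case nle: False
      show ?thesis
      proof (cases "L * r < kI i - card (R i)")
        case True
        from keyi[OF i True]
        have "int (L * (\<delta> - 1)) + (int (kI i) - int (card (R i))) + int dF \<le> int (card (U i - R i)) + 1"
          using nle by linarith
        moreover have "int (L * (\<delta> - 1)) = fl * (int \<delta> - 1)" using L \<delta> by (simp add: of_nat_diff)
        ultimately show ?thesis using \<Delta>_def[of i] by (simp add: algebra_simps)
      next
        case False
        then have h0: "int (kI i) - int (card (R i)) \<le> int (L * r)" using nle by linarith
        have h1: "int (L * r) = fl * int r" unfolding of_nat_mult L by simp
        have cm: "(int \<delta> - 1) * fl = fl * (int \<delta> - 1)" by (rule mult.commute)
        show ?thesis using h0 h1 cm flD Dsplit by linarith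
      qed
    qed
    show ?thesis using False goal flr by simp
  qed
  have part2: "\<Delta> i \<le> 0 \<and> card (R i) \<ge> kI i"
    if i: "i \<in> {1..t}" and gt: "int dF > int (nI i) - int (kI i) + 1" for i
  proof -
    have k: "kI i \<le> card (R i)"
    proof (rule ccontr)
      assume nle: "\<not> kI i \<le> card (R i)"
      then have "0 * r < kI i - card (R i)" by simp
      from keyi[OF i this] have "kI i - card (R i) + dF \<le> card (U i - R i) + 1" by simp
      then show False using sR[OF i] gt nle by linarith
    qed
    have "\<Delta> i \<le> 0" using \<Delta>_def[of i] sR[OF i] gt k by linarith
    then show ?thesis using k by simp
  qed
  show ?thesis using part1 part2 by blast
qed

end
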